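(* Let $\gamma>0$. There exists a sequence of positive numbers $(\beta_n)_{n\ge1}$ such that, with the convention $\beta_0=0$, $$\sup_{n\ge1}\Big\{(1-\nu_n)\Big(p_n+\frac{|q_n|}{\beta_n}+|q_{n-1}|\,\beta_{n-1}\Big)\Big\}<1 .$$
   Context: For $\gamma>0$ and integers $n\ge1$ define $\nu_n=\nu_n(\gamma)=(-1)^n\frac{\Gamma(2\gamma)\Gamma(n+\gamma)}{\Gamma(\gamma)\Gamma(n+2\gamma)}$, $p_n=p_n(\gamma)=\frac{2n(n-1)+(6n-4)\gamma+6\gamma^2}{(2n+3\gamma)(2n+3\gamma-2)}=\frac12+\frac{-\gamma+\frac32\gamma^2}{(2n+3\gamma)(2n+3\gamma-2)}$, $q_n=q_n(\gamma)=-\frac{1}{2n+3\gamma}\sqrt{\frac{(n+3\gamma-1)(n+1)(n+\gamma)}{(2n+3\gamma+1)(2n+3\gamma-1)}}$ (for $n\ge1$; the term with $q_0$ is multiplied by $\beta_0=0$ and hence absent). *)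

theory Defs
  imports "HOL-Analysis.Analysis"
begin

definition nu :: "real \<Rightarrow> nat \<Rightarrow> real" where
  "nu \<gamma> n = (-1) ^ n * (Gamma (2*\<gamma>) * Gamma (real n + \<gamma>)) /
                      (Gamma \<gamma> * Gamma (real n + 2*\<gamma>))"

definition pp :: "real \<Rightarrow> nat \<Rightarrow> real" where
  "pp \<gamma> n = (2 * real n * (real n - 1) + (6 * real n - 4) * \<gamma> + 6 * \<gamma>^2) /
             ((2 * real n + 3*\<gamma>) * (2 * real n + 3*\<gamma> - 2))"

definition qq :: "real \<Rightarrow> nat \<Rightarrow> real" where
  "qq \<gamma> n = - (1 / (2 * real n + 3*\<gamma>)) *
      sqrt (((real n + 3*\<gamma> - 1) * (real n + 1) * (real n + \<gamma>)) /
            ((2 * real n + 3*\<gamma> + 1) * (2 * real n + 3*\<gamma> - 1)))"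

end

theory Submission
  imports Defs
begin

lemma polyA:
  fixes n g :: real assumes g: "g \<ge> 0" and n: "n \<ge> 1"
  shows "8*((n+3*g-1)*(n+1)*(n+g)) \<le> (2*n+3*g)*((2*n+3*g)^2-1)"
proof -
  define t where "t = n - 1"
  have t: "t \<ge> 0" and nt: "n = t + 1" using n unfolding t_def by auto
  have eq: "(2*n+3*g)*((2*n+3*g)^2-1) - 8*((n+3*g-1)*(n+1)*(n+g))
     = 6*(1-3/2*g)^2 + 27*g*(g-1/4)^2 + 6*g^2 + 21/16*g
       + t*(30*(g-4/15)^2 + 58/15) + 4*t^2*g"
    unfolding nt by (simp add: algebra_simps power2_eq_square power3_eq_cube)
  have "0 \<le> 6*(1-3/2*g)^2 + 27*g*(g-1/4)^2 + 6*g^2 + 21/16*g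
       + t*(30*(g-4/15)^2 + 58/15) + 4*t^2*g"
    using g t by (intro add_nonneg_nonneg mult_nonneg_nonneg) simp_all
  then show ?thesis using eq by linarith
qed

lemma ineqD:
  fixes n g :: real assumes g: "g \<ge> 0" and n: "n \<ge> 4"
  shows "(2*n*(n-1)+(6*n-4)*g+6*g^2)/((2*n+3*g)*(2*n+3*g-2))
         + 16/(9*(2*n+3*g)) + 12*(1/(8*(2*n+3*g-2))) \<le> 99/100"
proof -
  define t where "t = n - 4"
  have t: "t \<ge> 0" and nt: "n = t + 4" using n unfolding t_def by auto
  define x where "x = 2*n+3*g"
  have x: "x > 2" using g n unfolding x_def by simp
  define num where "num = 2*n*(n-1)+(6*n-4)*g+6*g^2"
  define D where "D = x*(x-2)"
  define Q where "Q = 18*num+32*(x-2)+27*x"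
  have eq: "99*18*D - 100*Q
      = 1536 + 21144*g + 5238*g^2 + 12896*t + 10584*t*g + 3528*t^2"
    unfolding D_def Q_def x_def num_def nt by (simp add: algebra_simps power2_eq_square)
  have "0 \<le> 1536 + 21144*g + 5238*g^2 + 12896*t + 10584*t*g + 3528*t^2"
    using g t by (intro add_nonneg_nonneg mult_nonneg_nonneg) simp_all
  hence le: "Q \<le> 99/100*(18*D)"
    using eq by linarith
  have x2: "18*D > 0" using x unfolding D_def by simp
  have xn: "x \<noteq> 0" "x - 2 \<noteq> 0" using x by auto
  define y where "y = x - 2"
  have y: "y > 0" "x \<noteq> 0" "y \<noteq> 0" using x unfolding y_def by auto
  have "num/(x*y) + 16/(9*x) + 12*(1/(8*y)) = (18*num+32*y+27*x) / (18*(x*y))"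
    using y by (simp add: field_simps)
  hence "num/(x*(x-2)) + 16/(9*x) + 12*(1/(8*(x-2))) = Q / (18*D)"
    unfolding Q_def D_def y_def .
  also have "\<dots> \<le> 99/100" using x2 le by (rule pos_divide_le_eq[THEN iffD2])
  finally show ?thesis unfolding x_def num_def .
qed

lemma ineqE:
  fixes n g :: real assumes g: "g \<ge> 0" and n: "n \<ge> 3"
  shows "(1 + (2+g)/(4*(1+2*g))) * ((2*n*(n-1)+(6*n-4)*g+6*g^2)/((2*n+3*g)*(2*n+3*g-2))
         + 1/12 + 9/128) \<le> 99/100"
proof -
  define t where "t = n - 3"
  have t: "t \<ge> 0" and nt: "n = t + 3" using n unfolding t_def by auto
  define x where "x = 2*n+3*g"
  have x: "x > 2" using g n unfolding x_def by simp
  define y where "y = x - 2"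
  define d where "d = 1 + 2*g"
  have y: "y > 0" "x \<noteq> 0" "y \<noteq> 0" "d > 0" "d \<noteq> 0" using x g unfolding y_def d_def by auto
  define num where "num = 2*n*(n-1)+(6*n-4)*g+6*g^2"
  define D where "D = 4*d*384*(x*y)"
  define Q where "Q = (4*d+2+g)*(384*num+59*(x*y))"
  have eq: "99*D - 100*Q
      = 35136 + 2151792*g + 2360016*g^2 + 185652*g^3 + 29280*t + 1582128*t*g
        + 938736*t*g^2 + 5856*t^2 + 312912*t^2*g"
    unfolding D_def Q_def y_def d_def x_def num_def nt by (simp add: algebra_simps power2_eq_square power3_eq_cube)
  have "0 \<le> 35136 + 2151792*g + 2360016*g^2 + 185652*g^3 + 29280*t + 1582128*t*g
        + 938736*t*g^2 + 5856*t^2 + 312912*t^2*g"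
    using g t by (intro add_nonneg_nonneg mult_nonneg_nonneg) simp_all
  hence le: "Q \<le> 99/100*D"
    using eq by linarith
  have x2: "D > 0" using x y unfolding D_def by simp
  have "(1 + (2+g)/(4*d)) * (num/(x*y) + 1/12 + 9/128) = Q / D"
    unfolding Q_def D_def using y by (simp add: field_simps)
  also have "\<dots> \<le> 99/100" using x2 le by (rule pos_divide_le_eq[THEN iffD2])
  finally show ?thesis unfolding x_def num_def y_def d_def .
qed

lemma ineqC:
  fixes g :: real assumes g: "g \<ge> 0"
  shows "(1 - (1+g)/(2*(1+2*g))) * ((4+8*g+6*g^2)/((4+3*g)*(2+3*g)) + 16/(9*(4+3*g))
          + 4*g/((2+3*g)*(1+3*g))) \<le> 99/100"
proof -
  define a where "a = 4+3*g"
  define b where "b = 2+3*g"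
  define c where "c = 1+3*g"
  define d where "d = 1+2*g"
  have ab: "a > 0" "b > 0" "c > 0" "d > 0" using g unfolding a_def b_def c_def d_def by auto
  define S where "S = 9*c*(4+8*g+6*g^2)+16*b*c+36*g*a"
  define E where "E = 9*a*b*c"
  define D where "D = 2*d*E"
  define Q where "Q = (2*d-1-g)*S"
  have eq: "99*D - 100*Q = 7456 + 36156*g + 69354*g^2 + 99846*g^3 + 47628*g^4"
    unfolding D_def Q_def S_def E_def a_def b_def c_def d_def
    by (simp add: algebra_simps power2_eq_square power3_eq_cube power4_eq_xxxx)
  have "0 \<le> 7456 + 36156*g + 69354*g^2 + 99846*g^3 + 47628*g^4"
    using g by (intro add_nonneg_nonneg mult_nonneg_nonneg) simp_all
  hence le: "Q \<le> 99/100*D" using eq by linarith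
  have E: "D > 0" using ab unfolding D_def E_def by simp
  have "(1 - (1+g)/(2*d)) * ((4+8*g+6*g^2)/(a*b) + 16/(9*a) + 4*g/(b*c)) = Q/D"
    unfolding S_def E_def D_def Q_def using ab by (simp add: field_simps)
  also have "\<dots> \<le> 99/100" using E le by (rule pos_divide_le_eq[THEN iffD2])
  finally show ?thesis unfolding a_def b_def c_def d_def .
qed


lemma Gamma_succ_real: "(x::real) > 0 \<Longrightarrow> Gamma (x + 1) = x * Gamma x"
  by (rule Gamma_plus1) (auto dest: nonpos_Ints_nonpos)

definition Pr :: "real \<Rightarrow> nat \<Rightarrow> real" where
  "Pr \<gamma> n = (\<Prod>k<n. (real k + \<gamma>)/(real k + 2*\<gamma>))"

lemma Gamma_ratio:
  assumes "\<gamma> > 0"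
  shows "Gamma (2*\<gamma>) * Gamma (real n + \<gamma>) / (Gamma \<gamma> * Gamma (real n + 2*\<gamma>)) = Pr \<gamma> n"
proof (induction n)
  case 0
  have "Gamma \<gamma> > 0" "Gamma (2*\<gamma>) > 0" using assms by auto
  then show ?case by (simp add: Pr_def)
next
  case (Suc n)
  have g1: "Gamma (real (Suc n) + \<gamma>) = (real n + \<gamma>) * Gamma (real n + \<gamma>)"
    using Gamma_succ_real[of "real n + \<gamma>"] assms by (simp add: add_ac)
  have g2: "Gamma (real (Suc n) + 2*\<gamma>) = (real n + 2*\<gamma>) * Gamma (real n + 2*\<gamma>)"
    using Gamma_succ_real[of "real n + 2*\<gamma>"] assms by (simp add: add_ac)
  have p: "Gamma (real n + 2*\<gamma>) > 0" "Gamma \<gamma> > 0" "real n + 2*\<gamma> > 0" using assms by auto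
  have "Gamma (2*\<gamma>) * Gamma (real (Suc n) + \<gamma>) / (Gamma \<gamma> * Gamma (real (Suc n) + 2*\<gamma>))
      = (Gamma (2*\<gamma>) * Gamma (real n + \<gamma>) / (Gamma \<gamma> * Gamma (real n + 2*\<gamma>)))
        * ((real n + \<gamma>)/(real n + 2*\<gamma>))"
    unfolding g1 g2 using p by (simp add: field_simps)
  also have "\<dots> = Pr \<gamma> (Suc n)" using Suc by (simp add: Pr_def)
  finally show ?case .
qed

lemma nu_Pr: "\<gamma> > 0 \<Longrightarrow> nu \<gamma> n = (-1)^n * Pr \<gamma> n"
  unfolding nu_def by (subst times_divide_eq_right[symmetric]) (simp only: Gamma_ratio)

lemma Pr_pos: "\<gamma> > 0 \<Longrightarrow> Pr \<gamma> n > 0"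
  unfolding Pr_def by (rule prod_pos) auto

lemma Pr_Suc: "Pr \<gamma> (Suc n) = Pr \<gamma> n * ((real n + \<gamma>)/(real n + 2*\<gamma>))"
  unfolding Pr_def by simp

lemma Pr_Suc_le: "\<gamma> > 0 \<Longrightarrow> Pr \<gamma> (Suc n) \<le> Pr \<gamma> n"
proof -
  assume g: "\<gamma> > 0"
  have "(real n + \<gamma>)/(real n + 2*\<gamma>) \<le> 1" using g by simp
  moreover have "Pr \<gamma> n > 0" using Pr_pos g by blast
  ultimately show ?thesis unfolding Pr_Suc by (intro mult_left_le) auto
qed

lemma Pr_mono: assumes "\<gamma> > 0" "m \<le> n" shows "Pr \<gamma> n \<le> Pr \<gamma> m"
  using assms(2)
proof (induction n rule: dec_induct)
  case base then show ?case by simp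
next
  case (step n) then show ?case using Pr_Suc_le[of \<gamma> n] assms(1) by linarith
qed

lemma Pr_1: "\<gamma> > 0 \<Longrightarrow> Pr \<gamma> 1 = 1/2"
  unfolding Pr_def by simp

lemma Pr_2: "\<gamma> > 0 \<Longrightarrow> Pr \<gamma> 2 = (1+\<gamma>)/(2*(1+2*\<gamma>))"
proof -
  assume g: "\<gamma> > 0"
  have "Pr \<gamma> 2 = Pr \<gamma> 1 * ((1 + \<gamma>)/(1 + 2*\<gamma>))"
    using Pr_Suc[of \<gamma> 1] by (simp add: numeral_2_eq_2)
  also have "\<dots> = (1+\<gamma>)/(2*(1+2*\<gamma>))" unfolding Pr_1[OF g] using g by (simp add: field_simps)
  finally show ?thesis .
qed

lemma gen_cancel: fixes a b c :: real assumes "a \<noteq> 0" "b \<noteq> 0"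
  shows "a/(2*b) * (c/(2*a)) = c/(4*b)"
  using assms by (simp add: field_simps)

lemma Pr_3: "\<gamma> > 0 \<Longrightarrow> Pr \<gamma> 3 = (2+\<gamma>)/(4*(1+2*\<gamma>))"
proof -
  assume g: "\<gamma> > 0"
  have "Pr \<gamma> 3 = Pr \<gamma> 2 * ((2 + \<gamma>)/(2 + 2*\<gamma>))"
    using Pr_Suc[of \<gamma> 2] by (simp add: numeral_3_eq_3 numeral_2_eq_2)
  also have "\<dots> = (2+\<gamma>)/(4*(1+2*\<gamma>))" proof -
    have h: "2 + 2*\<gamma> = 2*(1+\<gamma>)" by simp
    have "1 + \<gamma> \<noteq> 0" "1 + 2*\<gamma> \<noteq> 0" using g by auto
    then show ?thesis unfolding Pr_2[OF g] h by (rule gen_cancel)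
  qed
  finally show ?thesis .
qed

lemma qq_sq:
  assumes g: "\<gamma> > 0" and n: "n \<ge> 1"
  shows "(qq \<gamma> n)^2 = ((real n + 3*\<gamma> - 1) * (real n + 1) * (real n + \<gamma>)) /
            ((2 * real n + 3*\<gamma>)^2 * ((2 * real n + 3*\<gamma> + 1) * (2 * real n + 3*\<gamma> - 1)))"
    and "qq \<gamma> n \<noteq> 0"
proof -
  have n1: "real n \<ge> 1" using n by simp
  have A: "(real n + 3*\<gamma> - 1) * (real n + 1) * (real n + \<gamma>) > 0" using n1 g by simp
  have B: "(2 * real n + 3*\<gamma> + 1) * (2 * real n + 3*\<gamma> - 1) > 0" using n1 g by simp
  have AB: "((real n + 3*\<gamma> - 1) * (real n + 1) * (real n + \<gamma>)) /
            ((2 * real n + 3*\<gamma> + 1) * (2 * real n + 3*\<gamma> - 1)) > 0" using A B by simp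
  show "(qq \<gamma> n)^2 = ((real n + 3*\<gamma> - 1) * (real n + 1) * (real n + \<gamma>)) /
            ((2 * real n + 3*\<gamma>)^2 * ((2 * real n + 3*\<gamma> + 1) * (2 * real n + 3*\<gamma> - 1)))"
    unfolding qq_def using AB by (simp add: power_mult_distrib power_divide)
  show "qq \<gamma> n \<noteq> 0" unfolding qq_def using AB g n1 by simp
qed

lemma qq_bound:
  assumes g: "\<gamma> > 0" and n: "n \<ge> 1"
  shows "(qq \<gamma> n)^2 \<le> 1/(8*(2 * real n + 3*\<gamma>))"
proof -
  define x where "x = 2 * real n + 3*\<gamma>"
  define A where "A = (real n + 3*\<gamma> - 1) * (real n + 1) * (real n + \<gamma>)"
  have n1: "real n \<ge> 1" using n by simp
  have x: "x > 2" using n1 g unfolding x_def by simp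
  have B: "(x+1)*(x-1) > 0" using x by simp
  have P: "8*A \<le> x*(x^2-1)" using polyA[of \<gamma> "real n"] g n1 unfolding A_def x_def by simp
  have "(qq \<gamma> n)^2 = A / (x^2 * ((x+1)*(x-1)))" using qq_sq(1)[OF g n] unfolding A_def x_def .
  also have "\<dots> \<le> 1/(8*x)"
  proof -
    have den: "x^2 * ((x+1)*(x-1)) > 0" using x B by simp
    have "A * (8*x) \<le> 1 * (x^2 * ((x+1)*(x-1)))"
    proof -
      have "A * (8*x) = x * (8*A)" by simp
      also have "\<dots> \<le> x * (x*(x^2-1))" using P x by (intro mult_left_mono) auto
      also have "\<dots> = 1 * (x^2 * ((x+1)*(x-1)))" by (simp add: algebra_simps power2_eq_square)
      finally show ?thesis .
    qed
    then show ?thesis using den x by (simp add: frac_le_eq divide_le_eq le_divide_eq field_simps)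
  qed
  finally show ?thesis unfolding x_def .
qed


lemma pp_nonneg: assumes g: "\<gamma> > 0" and n: "n \<ge> 1" shows "pp \<gamma> n \<ge> 0"
proof -
  have n1: "real n \<ge> 1" using n by simp
  have "2 * real n * (real n - 1) \<ge> 0" using n1 by simp
  moreover have "(6 * real n - 4) * \<gamma> \<ge> 0" using n1 g by simp
  moreover have "6*\<gamma>^2 \<ge> 0" by simp
  moreover have "(2 * real n + 3*\<gamma>) * (2 * real n + 3*\<gamma> - 2) > 0" using n1 g by simp
  ultimately show ?thesis unfolding pp_def by (intro divide_nonneg_pos) auto
qed

lemma case1: assumes g: "\<gamma> > 0"
  shows "(1 - (-1/2)) * (pp \<gamma> 1 + 1/(2*(2+3*\<gamma>)) + 0) = 1 - 1/(4*(2+3*\<gamma>))"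
proof -
  define a where "a = 2 + 3*\<gamma>"
  have a: "a \<noteq> 0" "\<gamma> \<noteq> 0" using g unfolding a_def by auto
  have "pp \<gamma> 1 = (2*\<gamma>+6*\<gamma>^2)/(a*(3*\<gamma>))" unfolding pp_def a_def by simp
  also have "\<dots> = (2+6*\<gamma>)/(3*a)" using a by (simp add: field_simps power2_eq_square)
  finally have p: "pp \<gamma> 1 = (2+6*\<gamma>)/(3*a)" .
  have e1: "(1 - (-1/2)) * ((2+6*\<gamma>)/(3*a) + 1/(2*a) + 0) = (7+12*\<gamma>)/(4*a)"
    using a by (simp add: field_simps)
  have e2: "1 - 1/(4*a) = (4*a-1)/(4*a)" using a by (simp add: field_simps)
  have e3: "4*a-1 = 7+12*\<gamma>" unfolding a_def by simp
  have "(1 - (-1/2)) * ((2+6*\<gamma>)/(3*a) + 1/(2*a) + 0) = 1 - 1/(4*a)"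
    unfolding e1 e2 e3 ..
  then show ?thesis unfolding p a_def .
qed

lemma pp2: assumes g: "\<gamma> > 0"
  shows "pp \<gamma> 2 = (4+8*\<gamma>+6*\<gamma>^2)/((4+3*\<gamma>)*(2+3*\<gamma>))"
  unfolding pp_def by (simp add: algebra_simps)

lemma K1q1: assumes g: "\<gamma> > 0"
  shows "2*(2+3*\<gamma>) * (qq \<gamma> 1)^2 = 4*\<gamma>/((2+3*\<gamma>)*(1+3*\<gamma>))"
proof -
  define a where "a = 2 + 3*\<gamma>"
  define b where "b = 1 + 3*\<gamma>"
  define c where "c = 1 + \<gamma>"
  have ab: "a \<noteq> 0" "b \<noteq> 0" "c \<noteq> 0" using g unfolding a_def b_def c_def by auto
  have "(qq \<gamma> 1)^2 = (3*\<gamma>*2*c)/(a^2*((3*c)*b))"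
    using qq_sq(1)[OF g, of 1] unfolding a_def b_def c_def by (simp add: algebra_simps)
  then have "2*a*(qq \<gamma> 1)^2 = 2*a*((3*\<gamma>*2*c)/(a^2*((3*c)*b)))" by simp
  also have "\<dots> = 4*\<gamma>/(a*b)" using ab by (simp add: field_simps power2_eq_square)
  finally show ?thesis unfolding a_def b_def .
qed

theorem propositionA2:
  fixes \<gamma> :: real
  assumes "\<gamma> > 0"
  shows "\<exists>\<beta> :: nat \<Rightarrow> real. \<beta> 0 = 0 \<and> (\<forall>n\<ge>1. \<beta> n > 0) \<and>
           (\<exists>c < 1. \<forall>n\<ge>1. (1 - nu \<gamma> n) *
              (pp \<gamma> n + \<bar>qq \<gamma> n\<bar> / \<beta> n + \<bar>qq \<gamma> (n - 1)\<bar> * \<beta> (n - 1)) \<le> c)"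
proof -
  have g: "\<gamma> > 0" using assms .
  define K where "K = (\<lambda>n::nat. if n = 1 then 2*(2+3*\<gamma>) else if odd n then 12
                                 else 9/16*(2*real n + 3*\<gamma>))"
  define \<beta> where "\<beta> = (\<lambda>n::nat. if n = 0 then 0 else K n * \<bar>qq \<gamma> n\<bar>)"
  have Kpos: "\<And>n. K n > 0" using g unfolding K_def by auto
  have qpos: "\<And>n. n \<ge> 1 \<Longrightarrow> \<bar>qq \<gamma> n\<bar> > 0" using qq_sq(2)[OF g] by auto
  define c where "c = max (1 - 1/(4*(2+3*\<gamma>))) (99/100)"
  have c1: "c < 1" using g unfolding c_def by auto
  have c99: "99/100 \<le> c" unfolding c_def by simp
  have cfirst: "1 - 1/(4*(2+3*\<gamma>)) \<le> c" unfolding c_def by simp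
  have main: "(1 - nu \<gamma> n) * (pp \<gamma> n + \<bar>qq \<gamma> n\<bar> / \<beta> n + \<bar>qq \<gamma> (n - 1)\<bar> * \<beta> (n - 1)) \<le> c"
    if n: "n \<ge> 1" for n
  proof -
    have t1: "\<bar>qq \<gamma> n\<bar> / \<beta> n = 1 / K n"
      using n qpos[OF n] Kpos[of n] unfolding \<beta>_def by auto
    have t2: "\<bar>qq \<gamma> (n-1)\<bar> * \<beta> (n-1) = (if n = 1 then 0 else K (n-1) * (qq \<gamma> (n-1))^2)"
      using n unfolding \<beta>_def by (simp add: power2_eq_square abs_mult_self_eq algebra_simps)
    have ppn: "pp \<gamma> n \<ge> 0" using pp_nonneg[OF g n] .
    show ?thesis
    proof (cases "n = 1")
      case True
      have nu1: "nu \<gamma> 1 = -1/2" using nu_Pr[OF g, of 1] Pr_1[OF g] by simp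
      have K1: "K 1 = 2*(2+3*\<gamma>)" unfolding K_def by simp
      have "(1 - nu \<gamma> n) * (pp \<gamma> n + \<bar>qq \<gamma> n\<bar> / \<beta> n + \<bar>qq \<gamma> (n - 1)\<bar> * \<beta> (n - 1))
          = (1 - nu \<gamma> 1) * (pp \<gamma> 1 + 1 / K 1 + 0)"
        unfolding t1 t2 using True by simp
      also have "\<dots> = 1 - 1/(4*(2+3*\<gamma>))"
        unfolding nu1 K1 using case1[OF g] by (simp add: mult.commute)
      finally have "(1 - nu \<gamma> n) * (pp \<gamma> n + \<bar>qq \<gamma> n\<bar> / \<beta> n + \<bar>qq \<gamma> (n - 1)\<bar> * \<beta> (n - 1))
          = 1 - 1/(4*(2+3*\<gamma>))" .
      then show ?thesis using cfirst by linarith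
    next
      case n1: False
      show ?thesis
      proof (cases "n = 2")
        case True
        have nu2: "nu \<gamma> 2 = (1+\<gamma>)/(2*(1+2*\<gamma>))" using nu_Pr[OF g, of 2] Pr_2[OF g] by simp
        have K2: "1 / K 2 = 16/(9*(4+3*\<gamma>))" unfolding K_def by simp
        have K1: "K 1 * (qq \<gamma> 1)^2 = 4*\<gamma>/((2+3*\<gamma>)*(1+3*\<gamma>))" unfolding K_def using K1q1[OF g] by simp
        have "(1 - nu \<gamma> n) * (pp \<gamma> n + \<bar>qq \<gamma> n\<bar> / \<beta> n + \<bar>qq \<gamma> (n - 1)\<bar> * \<beta> (n - 1))
          = (1 - (1+\<gamma>)/(2*(1+2*\<gamma>))) * ((4+8*\<gamma>+6*\<gamma>^2)/((4+3*\<gamma>)*(2+3*\<gamma>)) + 16/(9*(4+3*\<gamma>))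
          + 4*\<gamma>/((2+3*\<gamma>)*(1+3*\<gamma>)))"
        proof -
          have "(1 - nu \<gamma> n) * (pp \<gamma> n + \<bar>qq \<gamma> n\<bar> / \<beta> n + \<bar>qq \<gamma> (n - 1)\<bar> * \<beta> (n - 1))
             = (1 - nu \<gamma> 2) * (pp \<gamma> 2 + 1 / K 2 + K 1 * (qq \<gamma> 1)^2)"
            unfolding t1 t2 using True by simp
          then show ?thesis unfolding nu2 K2 pp2[OF g] K1 .
        qed
        also have "\<dots> \<le> 99/100" using ineqC[of \<gamma>] g by simp
        finally show ?thesis using c99 by linarith
      next
        case n2: False
        have n3: "n \<ge> 3" using n n1 n2 by simp
        have rn: "real (n - 1) = real n - 1" using n by simp
        have xq: "(qq \<gamma> (n-1))^2 \<le> 1/(8*(2 * real n + 3*\<gamma> - 2))"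
          using qq_bound[OF g, of "n-1"] n3 unfolding rn by (simp add: algebra_simps)
        have xpos: "2 * real n + 3*\<gamma> - 2 > 0" using n3 g by simp
        show ?thesis
        proof (cases "odd n")
          case True
          have Kn: "K n = 12" unfolding K_def using True n1 by simp
          have Km: "K (n-1) = 9/16*(2 * real n + 3*\<gamma> - 2)"
            unfolding K_def using True n3 rn by (auto simp: algebra_simps)
          have nun: "nu \<gamma> n = - Pr \<gamma> n" using nu_Pr[OF g, of n] True by simp
          have P3: "Pr \<gamma> n \<le> (2+\<gamma>)/(4*(1+2*\<gamma>))" using Pr_mono[OF g n3] Pr_3[OF g] by simp
          have Pn: "Pr \<gamma> n > 0" using Pr_pos[OF g] .
          have bq: "K (n-1) * (qq \<gamma> (n-1))^2 \<le> 9/128"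
          proof -
            have "K (n-1) * (qq \<gamma> (n-1))^2 \<le> 9/16*(2 * real n + 3*\<gamma> - 2) * (1/(8*(2 * real n + 3*\<gamma> - 2)))"
              unfolding Km using xq xpos by (intro mult_left_mono) auto
            also have "\<dots> = 9/128" using xpos by (simp add: field_simps)
            finally show ?thesis .
          qed
          have T0: "pp \<gamma> n + 1/K n + K (n-1) * (qq \<gamma> (n-1))^2 \<ge> 0"
            using ppn Kpos[of n] Kpos[of "n-1"] by (simp add: add_nonneg_nonneg)
          have "(1 - nu \<gamma> n) * (pp \<gamma> n + \<bar>qq \<gamma> n\<bar> / \<beta> n + \<bar>qq \<gamma> (n - 1)\<bar> * \<beta> (n - 1))
              = (1 + Pr \<gamma> n) * (pp \<gamma> n + 1/K n + K (n-1) * (qq \<gamma> (n-1))^2)"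
            unfolding t1 t2 nun using n1 by simp
          also have "\<dots> \<le> (1 + (2+\<gamma>)/(4*(1+2*\<gamma>))) * (pp \<gamma> n + 1/12 + 9/128)"
            using P3 Pn T0 bq unfolding Kn by (intro mult_mono) auto
          also have "\<dots> \<le> 99/100"
            using ineqE[of \<gamma> "real n"] g n3 unfolding pp_def by simp
          finally show ?thesis using c99 by linarith
        next
          case False
          have n4: "n \<ge> 4" using n3 False by presburger
          have Kn: "K n = 9/16*(2 * real n + 3*\<gamma>)" unfolding K_def using False n1 by simp
          have Km: "K (n-1) = 12"
            unfolding K_def using False n3 by auto
          have nun: "nu \<gamma> n = Pr \<gamma> n" using nu_Pr[OF g, of n] False by simp
          have Pn: "Pr \<gamma> n > 0" using Pr_pos[OF g] .
          have P1: "Pr \<gamma> n \<le> 1/2" using Pr_mono[OF g n] Pr_1[OF g] by simp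
          have T0: "pp \<gamma> n + 1/K n + K (n-1) * (qq \<gamma> (n-1))^2 \<ge> 0"
            using ppn Kpos[of n] Kpos[of "n-1"] by (simp add: add_nonneg_nonneg)
          have "(1 - nu \<gamma> n) * (pp \<gamma> n + \<bar>qq \<gamma> n\<bar> / \<beta> n + \<bar>qq \<gamma> (n - 1)\<bar> * \<beta> (n - 1))
              = (1 - Pr \<gamma> n) * (pp \<gamma> n + 1/K n + K (n-1) * (qq \<gamma> (n-1))^2)"
            unfolding t1 t2 nun using n1 by simp
          also have "\<dots> \<le> 1 * (pp \<gamma> n + 1/K n + K (n-1) * (qq \<gamma> (n-1))^2)"
            using Pn T0 by (intro mult_right_mono) auto
          also have "\<dots> \<le> pp \<gamma> n + 16/(9*(2 * real n + 3*\<gamma>)) + 12*(1/(8*(2 * real n + 3*\<gamma> - 2)))"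
            unfolding Kn Km using xq by simp
          also have "\<dots> \<le> 99/100"
            using ineqD[of \<gamma> "real n"] g n4 unfolding pp_def by simp
          finally show ?thesis using c99 by linarith
        qed
      qed
    qed
  qed
  show ?thesis
  proof (intro exI[of _ \<beta>] conjI allI impI)
    show "\<beta> 0 = 0" unfolding \<beta>_def by simp
    show "\<beta> n > 0" if "n \<ge> 1" for n
      using that Kpos[of n] qpos[OF that] unfolding \<beta>_def by simp
    show "\<exists>c<1. \<forall>n\<ge>1. (1 - nu \<gamma> n) *
              (pp \<gamma> n + \<bar>qq \<gamma> n\<bar> / \<beta> n + \<bar>qq \<gamma> (n - 1)\<bar> * \<beta> (n - 1)) \<le> c"
      using c1 main by blast
  qed
qed

end
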